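(* Let $m\ge0$ and let $\alpha=(\alpha_0,\dots,\alpha_{2m+5})\in\mathbb{R}^{2m+6}$ satisfy \[ -\tfrac12\le\alpha_0\le0,\quad\alpha_1=-\alpha_0,\quad\alpha_2\le\alpha_3\le\dots\le\alpha_{2m+5}\le\alpha_2+1,\quad\sum_{r=2}^{2m+5}\alpha_r=m+1 . \] Let \[ E(\alpha)=-2\alpha_0+\sum_{r\ge2:\alpha_r\le\alpha_0}2\alpha_0+\sum_{r\ge2:\alpha_0<\alpha_r<-\alpha_0}(\alpha_0+\alpha_r)+\sum_{r\ge2:1+\alpha_0<\alpha_r<1-\alpha_0}(\alpha_r-1-\alpha_0)+\sum_{r\ge2:\alpha_r\ge1-\alpha_0}(-2\alpha_0), \] all sums being over $2\le r\le 2m+5$. Write $A=\#\{r\ge2:\alpha_r<-\alpha_0\}$ and $B=\#\{r\ge2:\alpha_r>1+\alpha_0\}$. Then $E(\alpha)=0$ if and only if one of the following holds: (1) $\alpha_0=0$ or $\alpha_0=-\frac12$; (2) $\alpha_2\le\alpha_0$ and $-\alpha_0\le\alpha_r\le1+\alpha_0$ for all $r\ge3$; (3) $\alpha_0<\alpha_r<1-\alpha_0$ for all $r\ge2$, $2\le A\le m+3$, $B\le m+1$, and \[ \sum_{r\ge2:-\alpha_0\le\alpha_r\le1+\alpha_0}\alpha_r=(m+1-B)+(A-2-B)\alpha_0 . \] Moreover, for each choice of $A$, $B$ and $\alpha_0$ (as in (3)) there exist values of $\alpha_r$ ($r\ge2$) solving this equation; if $A=m+3$ then $\alpha_r=1+\alpha_0$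 for all $r$ with $-\alpha_0\le\alpha_r\le1+\alpha_0$, and if $B=m+1$ then $\alpha_r=-\alpha_0$ for all $r$ with $-\alpha_0\le\alpha_r\le1+\alpha_0$. *)

theory Defs
  imports Complex_Main
begin

text \<open>The vector alpha in R^(2m+6) is represented by a function nat => real,
  of which only the values at indices 0..2m+5 matter.\<close>

definition idx :: "nat \<Rightarrow> nat set" where
  "idx m = {2..2*m+5}"

definition admissible :: "nat \<Rightarrow> (nat \<Rightarrow> real) \<Rightarrow> bool" where
  "admissible m \<alpha> \<longleftrightarrow>
     -(1/2) \<le> \<alpha> 0 \<and> \<alpha> 0 \<le> 0 \<and> \<alpha> 1 = - \<alpha> 0 \<and>
     (\<forall>r. 2 \<le> r \<and> r < 2*m+5 \<longrightarrow> \<alpha> r \<le> \<alpha> (r+1)) \<and>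
     \<alpha> (2*m+5) \<le> \<alpha> 2 + 1 \<and>
     (\<Sum>r\<in>idx m. \<alpha> r) = real m + 1"

definition E_val :: "nat \<Rightarrow> (nat \<Rightarrow> real) \<Rightarrow> real" where
  "E_val m \<alpha> =
     - 2 * \<alpha> 0
     + (\<Sum>r\<in>{r\<in>idx m. \<alpha> r \<le> \<alpha> 0}. 2 * \<alpha> 0)
     + (\<Sum>r\<in>{r\<in>idx m. \<alpha> 0 < \<alpha> r \<and> \<alpha> r < - \<alpha> 0}. \<alpha> 0 + \<alpha> r)
     + (\<Sum>r\<in>{r\<in>idx m. 1 + \<alpha> 0 < \<alpha> r \<and> \<alpha> r < 1 - \<alpha> 0}. \<alpha> r - 1 - \<alpha> 0)
     + (\<Sum>r\<in>{r\<in>idx m. 1 - \<alpha> 0 \<le> \<alpha> r}. - 2 * \<alpha> 0)"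

definition cntA :: "nat \<Rightarrow> (nat \<Rightarrow> real) \<Rightarrow> nat" where
  "cntA m \<alpha> = card {r\<in>idx m. \<alpha> r < - \<alpha> 0}"

definition cntB :: "nat \<Rightarrow> (nat \<Rightarrow> real) \<Rightarrow> nat" where
  "cntB m \<alpha> = card {r\<in>idx m. 1 + \<alpha> 0 < \<alpha> r}"

definition mid :: "nat \<Rightarrow> (nat \<Rightarrow> real) \<Rightarrow> nat set" where
  "mid m \<alpha> = {r\<in>idx m. - \<alpha> 0 \<le> \<alpha> r \<and> \<alpha> r \<le> 1 + \<alpha> 0}"

definition cond1 :: "nat \<Rightarrow> (nat \<Rightarrow> real) \<Rightarrow> bool" where
  "cond1 m \<alpha> \<longleftrightarrow> \<alpha> 0 = 0 \<or> \<alpha> 0 = -(1/2)"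

definition cond2 :: "nat \<Rightarrow> (nat \<Rightarrow> real) \<Rightarrow> bool" where
  "cond2 m \<alpha> \<longleftrightarrow> \<alpha> 2 \<le> \<alpha> 0 \<and>
     (\<forall>r. 3 \<le> r \<and> r \<le> 2*m+5 \<longrightarrow> - \<alpha> 0 \<le> \<alpha> r \<and> \<alpha> r \<le> 1 + \<alpha> 0)"

definition cond3 :: "nat \<Rightarrow> (nat \<Rightarrow> real) \<Rightarrow> bool" where
  "cond3 m \<alpha> \<longleftrightarrow>
     (\<forall>r\<in>idx m. \<alpha> 0 < \<alpha> r \<and> \<alpha> r < 1 - \<alpha> 0) \<and>
     2 \<le> cntA m \<alpha> \<and> cntA m \<alpha> \<le> m + 3 \<and> cntB m \<alpha> \<le> m + 1 \<and>
     (\<Sum>r\<in>mid m \<alpha>. \<alpha> r) =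
       (real m + 1 - real (cntB m \<alpha>)) + (real (cntA m \<alpha>) - 2 - real (cntB m \<alpha>)) * \<alpha> 0"

end

theory Submission
  imports Defs
begin

lemma idx_finite[simp]: "finite (idx m)" by (simp add: idx_def)
lemma card_idx: "card (idx m) = 2*m+4" by (simp add: idx_def)

lemma adm_mono_aux:
  assumes "admissible m \<alpha>" "2 \<le> r" "r + d \<le> 2*m+5"
  shows "\<alpha> r \<le> \<alpha> (r+d)"
  using assms(3)
proof (induction d)
  case 0 then show ?case by simp
next
  case (Suc d)
  then have "\<alpha> r \<le> \<alpha> (r+d)" by simp
  moreover have "\<alpha> (r+d) \<le> \<alpha> (r+d+1)" using assms(1,2) Suc.prems unfolding admissible_def by auto
  ultimately show ?case by simp
qed

lemma adm_range:
  assumes "admissible m \<alpha>" "r \<in> idx m"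
  shows "\<alpha> 2 \<le> \<alpha> r \<and> \<alpha> r \<le> \<alpha> 2 + 1"
proof -
  have r: "2 \<le> r" "r \<le> 2*m+5" using assms(2) by (auto simp: idx_def)
  have "\<alpha> 2 \<le> \<alpha> (2 + (r-2))" by (rule adm_mono_aux[OF assms(1)]) (use r in auto)
  moreover have "\<alpha> r \<le> \<alpha> (r + (2*m+5-r))" by (rule adm_mono_aux[OF assms(1)]) (use r in auto)
  moreover have "2 + (r-2) = r" "r + (2*m+5-r) = 2*m+5" using r by auto
  ultimately show ?thesis using assms(1) unfolding admissible_def by simp
qed

definition T :: "real \<Rightarrow> real \<Rightarrow> real" where
 "T a x = (if x \<le> a then 2*a else 0) + (if a < x \<and> x < -a then a + x else 0)
   + (if 1+a < x \<and> x < 1-a then x-1-a else 0) + (if 1-a \<le> x then -2*a else 0)"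

lemma E_alt: "E_val m \<alpha> = -2 * \<alpha> 0 + (\<Sum>r\<in>idx m. T (\<alpha> 0) (\<alpha> r))"
  unfolding E_val_def T_def sum.inter_filter[OF idx_finite] by (simp only: sum.distrib add.assoc)

lemma part_sum:
  fixes f :: "nat \<Rightarrow> 'b::comm_monoid_add"
  assumes "admissible m \<alpha>"
  shows "sum f (idx m) = sum f {r\<in>idx m. \<alpha> r < - \<alpha> 0} + sum f (mid m \<alpha>)
           + sum f {r\<in>idx m. 1 + \<alpha> 0 < \<alpha> r}"
proof -
  have a: "-(1/2) \<le> \<alpha> 0" using assms by (simp add: admissible_def)
  have "sum f (idx m) = (\<Sum>r\<in>idx m. (if \<alpha> r < - \<alpha> 0 then f r else 0)
      + (if - \<alpha> 0 \<le> \<alpha> r \<and> \<alpha> r \<le> 1 + \<alpha> 0 then f r else 0)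
      + (if 1 + \<alpha> 0 < \<alpha> r then f r else 0))"
    by (rule sum.cong) (use a in auto)
  then show ?thesis unfolding mid_def sum.inter_filter[OF idx_finite] by (simp only: sum.distrib add.assoc)
qed

lemma part_card:
  assumes "admissible m \<alpha>"
  shows "2*m+4 = cntA m \<alpha> + card (mid m \<alpha>) + cntB m \<alpha>"
  using part_sum[OF assms, of "\<lambda>_. 1::nat"] by (simp add: card_idx cntA_def cntB_def)

lemma sum_eq_bound:
  assumes "finite S" "\<forall>x\<in>S. f x \<le> (c::real)" "sum f S = real (card S) * c"
  shows "\<forall>x\<in>S. f x = c"
proof -
  have "(\<Sum>x\<in>S. c - f x) = 0" using assms by (simp add: sum_subtractf)
  then have "\<forall>x\<in>S. c - f x = 0" using sum_nonneg_eq_0_iff[of S "\<lambda>x. c - f x"] assms by auto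
  thus ?thesis by auto
qed

lemma Ssum:
  assumes adm: "admissible m \<alpha>"
  shows "real m + 1 = (\<Sum>r\<in>{r\<in>idx m. \<alpha> r < - \<alpha> 0}. \<alpha> r) + (\<Sum>r\<in>mid m \<alpha>. \<alpha> r)
           + (\<Sum>r\<in>{r\<in>idx m. 1 + \<alpha> 0 < \<alpha> r}. \<alpha> r)"
  using part_sum[OF adm, of \<alpha>] adm by (simp add: admissible_def)

lemma E_c3:
  assumes adm: "admissible m \<alpha>" and c3: "\<forall>r\<in>idx m. \<alpha> 0 < \<alpha> r \<and> \<alpha> r < 1 - \<alpha> 0"
  shows "E_val m \<alpha> = -2*\<alpha> 0 + (\<Sum>r\<in>{r\<in>idx m. \<alpha> r < - \<alpha> 0}. \<alpha> 0 + \<alpha> r)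
          + (\<Sum>r\<in>{r\<in>idx m. 1 + \<alpha> 0 < \<alpha> r}. \<alpha> r - 1 - \<alpha> 0)"
proof -
  have "(\<Sum>r\<in>idx m. T (\<alpha> 0) (\<alpha> r)) = (\<Sum>r\<in>idx m. (if \<alpha> r < - \<alpha> 0 then \<alpha> 0 + \<alpha> r else 0)
     + (if 1 + \<alpha> 0 < \<alpha> r then \<alpha> r - 1 - \<alpha> 0 else 0))"
    by (rule sum.cong) (use c3 in \<open>auto simp: T_def\<close>)
  then show ?thesis unfolding E_alt sum.inter_filter[OF idx_finite] by (simp only: sum.distrib add.assoc)
qed

lemma SL: "(\<Sum>r\<in>{r\<in>idx m. \<alpha> r < - \<alpha> 0}. \<alpha> 0 + \<alpha> r)
   = real (cntA m \<alpha>) * \<alpha> 0 + (\<Sum>r\<in>{r\<in>idx m. \<alpha> r < - \<alpha> 0}. \<alpha> r)"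
  by (simp add: cntA_def sum.distrib)

lemma SU: "(\<Sum>r\<in>{r\<in>idx m. 1 + \<alpha> 0 < \<alpha> r}. \<alpha> r - 1 - \<alpha> 0)
   = (\<Sum>r\<in>{r\<in>idx m. 1 + \<alpha> 0 < \<alpha> r}. \<alpha> r) - real (cntB m \<alpha>) * (1 + \<alpha> 0)"
  by (simp add: cntB_def sum_subtractf ring_distribs)

lemma fwd:
  assumes adm: "admissible m \<alpha>" and a1: "-(1/2) < \<alpha> 0" and a2: "\<alpha> 0 < 0"
    and E: "E_val m \<alpha> = 0"
  shows "cond2 m \<alpha> \<or> cond3 m \<alpha>"
proof -
  have rng: "\<And>r. r \<in> idx m \<Longrightarrow> \<alpha> 2 \<le> \<alpha> r \<and> \<alpha> r \<le> \<alpha> 2 + 1" using adm_range[OF adm] by auto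
  have i2: "2 \<in> idx m" by (simp add: idx_def)
  have E': "-2*\<alpha> 0 + (\<Sum>r\<in>idx m. T (\<alpha> 0) (\<alpha> r)) = 0" using E by (simp add: E_alt)
  consider (c1) "\<exists>r\<in>idx m. 1 - \<alpha> 0 \<le> \<alpha> r" | (c2) "\<exists>r\<in>idx m. \<alpha> r \<le> \<alpha> 0"
    | (c3) "\<forall>r\<in>idx m. \<alpha> 0 < \<alpha> r \<and> \<alpha> r < 1 - \<alpha> 0" by force
  then show ?thesis
  proof cases
    case c1
    then obtain r where r: "r\<in>idx m" "1 - \<alpha> 0 \<le> \<alpha> r" by auto
    have h2: "- \<alpha> 0 \<le> \<alpha> 2" using rng[OF r(1)] r(2) by linarith
    have "\<And>s. s\<in>idx m \<Longrightarrow> - \<alpha> 0 \<le> \<alpha> s" using rng h2 by force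
    then have "\<And>s. s\<in>idx m \<Longrightarrow> 0 \<le> T (\<alpha> 0) (\<alpha> s)" using a2 by (force simp: T_def)
    then have "0 \<le> (\<Sum>r\<in>idx m. T (\<alpha> 0) (\<alpha> r))" by (rule sum_nonneg)
    then show ?thesis using E' a2 by linarith
  next
    case c2
    then obtain r where r: "r\<in>idx m" "\<alpha> r \<le> \<alpha> 0" by auto
    have h2: "\<alpha> 2 \<le> \<alpha> 0" using rng[OF r(1)] r(2) by linarith
    have up: "\<And>s. s\<in>idx m \<Longrightarrow> \<alpha> s \<le> 1 + \<alpha> 0" using rng h2 by force
    have Tle: "\<And>s. s \<in> idx m \<Longrightarrow> T (\<alpha> 0) (\<alpha> s) \<le> 0" using up a2 by (force simp: T_def)
    have T2: "T (\<alpha> 0) (\<alpha> 2) = 2 * \<alpha> 0" using h2 a2 by (simp add: T_def)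
    have "(\<Sum>r\<in>idx m. T (\<alpha> 0) (\<alpha> r)) = T (\<alpha> 0) (\<alpha> 2) + (\<Sum>r\<in>idx m - {2}. T (\<alpha> 0) (\<alpha> r))"
      using i2 by (simp add: sum.remove)
    then have S0: "(\<Sum>r\<in>idx m - {2}. - T (\<alpha> 0) (\<alpha> r)) = 0" using E' T2 by (simp add: sum_negf)
    then have z: "\<forall>s\<in>idx m - {2}. - T (\<alpha> 0) (\<alpha> s) = 0"
      using sum_nonneg_eq_0_iff[of "idx m - {2}" "\<lambda>s. - T (\<alpha> 0) (\<alpha> s)"] Tle by auto
    have "cond2 m \<alpha>"
      unfolding cond2_def
    proof (intro conjI)
      show "\<alpha> 2 \<le> \<alpha> 0" using h2 by simp
      show "\<forall>r. 3 \<le> r \<and> r \<le> 2*m+5 \<longrightarrow> - \<alpha> 0 \<le> \<alpha> r \<and> \<alpha> r \<le> 1 + \<alpha> 0"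
      proof (intro allI impI)
      fix s assume s: "3 \<le> s \<and> s \<le> 2*m+5"
      then have si: "s \<in> idx m - {2}" by (auto simp: idx_def)
      have "T (\<alpha> 0) (\<alpha> s) = 0" using z si by auto
      moreover have "\<alpha> s \<le> 1 + \<alpha> 0" using up si by auto
      ultimately show "- \<alpha> 0 \<le> \<alpha> s \<and> \<alpha> s \<le> 1 + \<alpha> 0" using a2 unfolding T_def
        by (auto split: if_splits)
      qed
    qed
    then show ?thesis by simp
  next
    case c3
    define L where "L = {r\<in>idx m. \<alpha> r < - \<alpha> 0}"
    define U where "U = {r\<in>idx m. 1 + \<alpha> 0 < \<alpha> r}"
    have ES: "-2*\<alpha> 0 + (\<Sum>r\<in>L. \<alpha> 0 + \<alpha> r) + (\<Sum>r\<in>U. \<alpha> r - 1 - \<alpha> 0) = 0"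
      using E E_c3[OF adm c3] by (simp add: L_def U_def)
    have SL': "(\<Sum>r\<in>L. \<alpha> 0 + \<alpha> r) = real (cntA m \<alpha>) * \<alpha> 0 + (\<Sum>r\<in>L. \<alpha> r)"
      unfolding L_def by (rule SL)
    have SU': "(\<Sum>r\<in>U. \<alpha> r - 1 - \<alpha> 0) = (\<Sum>r\<in>U. \<alpha> r) - real (cntB m \<alpha>) * (1 + \<alpha> 0)"
      unfolding U_def by (rule SU)
    have Ss: "real m + 1 = (\<Sum>r\<in>L. \<alpha> r) + (\<Sum>r\<in>mid m \<alpha>. \<alpha> r) + (\<Sum>r\<in>U. \<alpha> r)"
      unfolding L_def U_def by (rule Ssum[OF adm])
    have cardp: "2*m+4 = cntA m \<alpha> + card (mid m \<alpha>) + cntB m \<alpha>" by (rule part_card[OF adm])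
    have kk: "real (card (mid m \<alpha>)) = 2*real m + 4 - real (cntA m \<alpha>) - real (cntB m \<alpha>)"
      using arg_cong[OF cardp, of real] by simp
    have Mup: "(\<Sum>r\<in>mid m \<alpha>. \<alpha> r) \<le> real (card (mid m \<alpha>)) * (1 + \<alpha> 0)"
      by (rule sum_bounded_above) (auto simp: mid_def)
    have Mlo: "real (card (mid m \<alpha>)) * (- \<alpha> 0) \<le> (\<Sum>r\<in>mid m \<alpha>. \<alpha> r)"
      by (rule sum_bounded_below) (auto simp: mid_def)
    have eq0: "(\<Sum>r\<in>mid m \<alpha>. \<alpha> r) = real m + 1 - real (cntB m \<alpha>) + real (cntA m \<alpha>) * \<alpha> 0
        - 2 * \<alpha> 0 - real (cntB m \<alpha>) * \<alpha> 0"
      using ES SL' SU' Ss by (simp add: algebra_simps)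
    have eq: "(\<Sum>r\<in>mid m \<alpha>. \<alpha> r) = (real m + 1 - real (cntB m \<alpha>))
        + (real (cntA m \<alpha>) - 2 - real (cntB m \<alpha>)) * \<alpha> 0"
      using eq0 by (simp add: algebra_simps)
    have A2: "2 \<le> cntA m \<alpha>"
    proof (rule ccontr)
      assume "\<not> ?thesis"
      then have cl: "card L \<le> 1" by (simp add: cntA_def L_def)
      have fL: "finite L" by (simp add: L_def)
      have gt: "(\<Sum>r\<in>L. \<alpha> 0 + \<alpha> r) > 2 * \<alpha> 0"
      proof (cases "card L = 0")
        case True
        then have "L = {}" using fL by simp
        then show ?thesis using a2 by simp
      next
        case False
        then have "card L = 1" using cl by simp
        then obtain x where x: "L = {x}" by (rule card_1_singletonE)
        then have "x \<in> idx m" by (auto simp: L_def)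
        then show ?thesis using x c3 by auto
      qed
      have "0 \<le> (\<Sum>r\<in>U. \<alpha> r - 1 - \<alpha> 0)" by (rule sum_nonneg) (auto simp: U_def)
      then show False using gt ES by linarith
    qed
    have i1: "(real (card (mid m \<alpha>))) * (1 + \<alpha> 0) - ((real m + 1 - real (cntB m \<alpha>))
        + (real (cntA m \<alpha>) - 2 - real (cntB m \<alpha>)) * \<alpha> 0) = (real m + 3 - real (cntA m \<alpha>)) * (1 + 2 * \<alpha> 0)"
      unfolding kk by (simp add: algebra_simps)
    have "0 \<le> (real m + 3 - real (cntA m \<alpha>)) * (1 + 2 * \<alpha> 0)" using i1 Mup eq by linarith
    then have "0 \<le> real m + 3 - real (cntA m \<alpha>)" using a1 by (simp add: zero_le_mult_iff)
    then have A3: "cntA m \<alpha> \<le> m + 3" by linarith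
    have i2: "((real m + 1 - real (cntB m \<alpha>)) + (real (cntA m \<alpha>) - 2 - real (cntB m \<alpha>)) * \<alpha> 0)
       - (real (card (mid m \<alpha>))) * (- \<alpha> 0) = (real m + 1 - real (cntB m \<alpha>)) * (1 + 2 * \<alpha> 0)"
      unfolding kk by (simp add: algebra_simps)
    have "0 \<le> (real m + 1 - real (cntB m \<alpha>)) * (1 + 2 * \<alpha> 0)" using i2 Mlo eq by linarith
    then have "0 \<le> real m + 1 - real (cntB m \<alpha>)" using a1 by (simp add: zero_le_mult_iff)
    then have B1: "cntB m \<alpha> \<le> m + 1" by linarith
    have "cond3 m \<alpha>" unfolding cond3_def using c3 A2 A3 B1 eq by simp
    then show ?thesis by simp
  qed
qed

lemma bwd0: assumes "\<alpha> 0 = 0" shows "E_val m \<alpha> = 0"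
proof -
  have "\<And>x. T 0 x = 0" by (simp add: T_def)
  then show ?thesis using assms by (simp add: E_alt)
qed

lemma bwd_half:
  assumes adm: "admissible m \<alpha>" and a: "\<alpha> 0 = -(1/2)"
  shows "E_val m \<alpha> = 0"
proof -
  have rng: "\<And>r. r \<in> idx m \<Longrightarrow> \<alpha> 2 \<le> \<alpha> r \<and> \<alpha> r \<le> \<alpha> 2 + 1" using adm_range[OF adm] by auto
  have i2: "2 \<in> idx m" by (simp add: idx_def)
  have S: "(\<Sum>r\<in>idx m. \<alpha> r) = real m + 1" using adm by (simp add: admissible_def)
  have ci: "card (idx m - {2}) = 2*m+3" using i2 by (simp add: card_idx)
  have lo: "- (1/2) \<le> \<alpha> 2"
  proof (rule ccontr)
    assume h: "\<not> ?thesis"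
    have "(\<Sum>r\<in>idx m - {2}. \<alpha> r) \<le> real (card (idx m - {2})) * (\<alpha> 2 + 1)"
      by (rule sum_bounded_above) (use rng in auto)
    also have "\<dots> \<le> real (card (idx m - {2})) * (1/2)"
      by (rule mult_left_mono) (use h in auto)
    finally have "(\<Sum>r\<in>idx m - {2}. \<alpha> r) \<le> real m + 3/2" using ci by simp
    moreover have "(\<Sum>r\<in>idx m. \<alpha> r) = \<alpha> 2 + (\<Sum>r\<in>idx m - {2}. \<alpha> r)"
      using i2 by (simp add: sum.remove)
    ultimately show False using S h by linarith
  qed
  have hi: "\<alpha> 2 \<le> 1/2"
  proof (rule ccontr)
    assume h: "\<not> ?thesis"
    have "real (card (idx m)) * (1/2) \<le> real (card (idx m)) * \<alpha> 2"
      by (rule mult_left_mono) (use h in auto)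
    also have "\<dots> \<le> (\<Sum>r\<in>idx m. \<alpha> r)"
      by (rule sum_bounded_below) (use rng in auto)
    finally show False using S by (simp add: card_idx)
  qed
  have "\<And>r. r \<in> idx m \<Longrightarrow> T (\<alpha> 0) (\<alpha> r) = \<alpha> r - 1/2"
  proof -
    fix r assume "r \<in> idx m"
    then have "-(1/2) \<le> \<alpha> r \<and> \<alpha> r \<le> 3/2" using rng lo hi by force
    then show "T (\<alpha> 0) (\<alpha> r) = \<alpha> r - 1/2" unfolding a T_def by auto
  qed
  then have "(\<Sum>r\<in>idx m. T (\<alpha> 0) (\<alpha> r)) = (\<Sum>r\<in>idx m. \<alpha> r - 1/2)" by (rule sum.cong[OF refl])
  also have "\<dots> = real m + 1 - real (2*m+4) * (1/2)" using S by (simp add: sum_subtractf card_idx)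
  finally show ?thesis by (simp add: E_alt a field_simps)
qed

lemma bwd2:
  assumes adm: "admissible m \<alpha>" and a2: "\<alpha> 0 < 0" and c: "cond2 m \<alpha>"
  shows "E_val m \<alpha> = 0"
proof -
  have i2: "2 \<in> idx m" by (simp add: idx_def)
  have h2: "\<alpha> 2 \<le> \<alpha> 0" using c by (simp add: cond2_def)
  have T2: "T (\<alpha> 0) (\<alpha> 2) = 2 * \<alpha> 0" using h2 a2 by (simp add: T_def)
  have "\<And>s. s \<in> idx m - {2} \<Longrightarrow> T (\<alpha> 0) (\<alpha> s) = 0"
  proof -
    fix s assume "s \<in> idx m - {2}"
    then have "3 \<le> s \<and> s \<le> 2*m+5" by (auto simp: idx_def)
    then have "- \<alpha> 0 \<le> \<alpha> s \<and> \<alpha> s \<le> 1 + \<alpha> 0" using c by (simp add: cond2_def)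
    then show "T (\<alpha> 0) (\<alpha> s) = 0" using a2 by (auto simp: T_def)
  qed
  then have "(\<Sum>r\<in>idx m - {2}. T (\<alpha> 0) (\<alpha> r)) = 0" by simp
  moreover have "(\<Sum>r\<in>idx m. T (\<alpha> 0) (\<alpha> r)) = T (\<alpha> 0) (\<alpha> 2) + (\<Sum>r\<in>idx m - {2}. T (\<alpha> 0) (\<alpha> r))"
    using i2 by (simp add: sum.remove)
  ultimately show ?thesis using T2 by (simp add: E_alt)
qed

lemma bwd3:
  assumes adm: "admissible m \<alpha>" and c: "cond3 m \<alpha>"
  shows "E_val m \<alpha> = 0"
proof -
  have c3: "\<forall>r\<in>idx m. \<alpha> 0 < \<alpha> r \<and> \<alpha> r < 1 - \<alpha> 0"
    and eq: "(\<Sum>r\<in>mid m \<alpha>. \<alpha> r) =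
       (real m + 1 - real (cntB m \<alpha>)) + (real (cntA m \<alpha>) - 2 - real (cntB m \<alpha>)) * \<alpha> 0"
    using c by (auto simp: cond3_def)
  have eq': "(\<Sum>r\<in>mid m \<alpha>. \<alpha> r) = real m + 1 - real (cntB m \<alpha>) + real (cntA m \<alpha>) * \<alpha> 0
        - 2 * \<alpha> 0 - real (cntB m \<alpha>) * \<alpha> 0" using eq by (simp add: algebra_simps)
  have SU': "(\<Sum>r\<in>{r\<in>idx m. 1 + \<alpha> 0 < \<alpha> r}. \<alpha> r - 1 - \<alpha> 0)
   = (\<Sum>r\<in>{r\<in>idx m. 1 + \<alpha> 0 < \<alpha> r}. \<alpha> r) - real (cntB m \<alpha>) - real (cntB m \<alpha>) * \<alpha> 0"
    using SU[of \<alpha> m] by (simp add: algebra_simps)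
  show ?thesis using E_c3[OF adm c3] SL[of \<alpha> m] SU' Ssum[OF adm] eq' by linarith
qed

lemma part0:
  "(\<forall>\<alpha>. admissible m \<alpha> \<longrightarrow>
        (E_val m \<alpha> = 0 \<longleftrightarrow> cond1 m \<alpha> \<or> cond2 m \<alpha> \<or> cond3 m \<alpha>))"
proof (intro allI impI)
  fix \<alpha> assume adm: "admissible m \<alpha>"
  have ab: "-(1/2) \<le> \<alpha> 0" "\<alpha> 0 \<le> 0" using adm by (auto simp: admissible_def)
  show "E_val m \<alpha> = 0 \<longleftrightarrow> cond1 m \<alpha> \<or> cond2 m \<alpha> \<or> cond3 m \<alpha>"
  proof
    assume E: "E_val m \<alpha> = 0"
    show "cond1 m \<alpha> \<or> cond2 m \<alpha> \<or> cond3 m \<alpha>"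
    proof (cases "\<alpha> 0 = 0 \<or> \<alpha> 0 = -(1/2)")
      case True then show ?thesis by (simp add: cond1_def)
    next
      case False
      then have "-(1/2) < \<alpha> 0" "\<alpha> 0 < 0" using ab by auto
      then show ?thesis using fwd[OF adm _ _ E] by auto
    qed
  next
    assume h: "cond1 m \<alpha> \<or> cond2 m \<alpha> \<or> cond3 m \<alpha>"
    show "E_val m \<alpha> = 0"
    proof (cases "\<alpha> 0 = 0 \<or> \<alpha> 0 = -(1/2)")
      case True then show ?thesis using bwd0 bwd_half[OF adm] by auto
    next
      case False
      then have "\<alpha> 0 < 0" using ab by auto
      then show ?thesis using h False bwd2[OF adm] bwd3[OF adm] by (auto simp: cond1_def)
    qed
  qed
qed

lemma part1:
  "(\<forall>a0 A B. -(1/2) < a0 \<and> a0 < 0 \<and> 2 \<le> A \<and> A \<le> m + 3 \<and> B \<le> m + 1 \<longrightarrow>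
        (\<exists>x :: nat \<Rightarrow> real.
           (\<forall>i < 2*m+4 - A - B. - a0 \<le> x i \<and> x i \<le> 1 + a0) \<and>
           (\<Sum>i<2*m+4 - A - B. x i) = (real m + 1 - real B) + (real A - 2 - real B) * a0))"
proof (intro allI impI)
  fix a0 :: real and A B :: nat
  assume h: "-(1/2) < a0 \<and> a0 < 0 \<and> 2 \<le> A \<and> A \<le> m + 3 \<and> B \<le> m + 1"
  define k where "k = 2*m+4 - A - B"
  define S where "S = (real m + 1 - real B) + (real A - 2 - real B) * a0"
  have rk: "real k = 2 * real m + 4 - real A - real B" using h by (simp add: k_def)
  have d1: "S - real k * (- a0) = (real m + 1 - real B) * (1 + 2*a0)"
    unfolding rk S_def by (simp add: algebra_simps)
  have d2: "real k * (1 + a0) - S = (real m + 3 - real A) * (1 + 2*a0)"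
    unfolding rk S_def by (simp add: algebra_simps)
  have q1: "0 \<le> real m + 1 - real B" "0 \<le> real m + 3 - real A" "0 \<le> 1 + 2*a0" using h by auto
  have p1: "0 \<le> (real m + 1 - real B) * (1 + 2*a0)" using q1 by (intro mult_nonneg_nonneg)
  have p2: "0 \<le> (real m + 3 - real A) * (1 + 2*a0)" using q1 by (intro mult_nonneg_nonneg)
  have main: "\<exists>x :: nat \<Rightarrow> real. (\<forall>i < k. - a0 \<le> x i \<and> x i \<le> 1 + a0) \<and> (\<Sum>i<k. x i) = S"
  proof (cases "k = 0")
    case True
    then have "A = m+3" "B = m+1" using h by (auto simp: k_def)
    then have S0: "S = 0" by (simp add: S_def)
    show ?thesis by (rule exI[of _ "\<lambda>_. 0"]) (simp add: True S0)
  next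
    case False
    then have kp: "0 < real k" by simp
    have e1: "(- a0) * real k \<le> S" using d1 p1 by (simp add: algebra_simps)
    have e2: "S \<le> (1 + a0) * real k" using d2 p2 by (simp add: algebra_simps)
    have b1: "- a0 \<le> S / real k" using e1 by (simp add: pos_le_divide_eq[OF kp])
    have b2: "S / real k \<le> 1 + a0" using e2 by (simp add: pos_divide_le_eq[OF kp])
    have b3: "(\<Sum>i<k. S / real k) = S" using kp by simp
    show ?thesis by (rule exI[of _ "\<lambda>_. S / real k"]) (use b1 b2 b3 in simp)
  qed
  then show "\<exists>x :: nat \<Rightarrow> real.
           (\<forall>i < 2*m+4 - A - B. - a0 \<le> x i \<and> x i \<le> 1 + a0) \<and>
           (\<Sum>i<2*m+4 - A - B. x i) = (real m + 1 - real B) + (real A - 2 - real B) * a0"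
    unfolding k_def S_def .
qed

lemma part2:
  "(\<forall>\<alpha>. admissible m \<alpha> \<and> cond3 m \<alpha> \<and> cntA m \<alpha> = m + 3 \<longrightarrow>
        (\<forall>r\<in>mid m \<alpha>. \<alpha> r = 1 + \<alpha> 0))"
proof (intro allI impI)
  fix \<alpha> assume h: "admissible m \<alpha> \<and> cond3 m \<alpha> \<and> cntA m \<alpha> = m + 3"
  then have adm: "admissible m \<alpha>" and A: "cntA m \<alpha> = m + 3" and B: "cntB m \<alpha> \<le> m + 1"
    and eq: "(\<Sum>r\<in>mid m \<alpha>. \<alpha> r) =
       (real m + 1 - real (cntB m \<alpha>)) + (real (cntA m \<alpha>) - 2 - real (cntB m \<alpha>)) * \<alpha> 0"
    by (auto simp: cond3_def)
  have c: "card (mid m \<alpha>) = m + 1 - cntB m \<alpha>" using part_card[OF adm] A by simp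
  have "(\<Sum>r\<in>mid m \<alpha>. \<alpha> r) = real (card (mid m \<alpha>)) * (1 + \<alpha> 0)"
  proof -
    have rB: "real (card (mid m \<alpha>)) = real m + 1 - real (cntB m \<alpha>)" using c B by (simp add: of_nat_diff)
    have e2: "real (cntA m \<alpha>) - 2 - real (cntB m \<alpha>) = real m + 1 - real (cntB m \<alpha>)" using A by simp
    show ?thesis unfolding rB eq e2 by (simp add: ring_distribs)
  qed
  then show "\<forall>r\<in>mid m \<alpha>. \<alpha> r = 1 + \<alpha> 0"
    by (intro sum_eq_bound) (auto simp: mid_def)
qed

lemma part3:
  "(\<forall>\<alpha>. admissible m \<alpha> \<and> cond3 m \<alpha> \<and> cntB m \<alpha> = m + 1 \<longrightarrow>
        (\<forall>r\<in>mid m \<alpha>. \<alpha> r = - \<alpha> 0))"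
proof (intro allI impI)
  fix \<alpha> assume h: "admissible m \<alpha> \<and> cond3 m \<alpha> \<and> cntB m \<alpha> = m + 1"
  then have adm: "admissible m \<alpha>" and B: "cntB m \<alpha> = m + 1" and A: "cntA m \<alpha> \<le> m + 3"
    and eq: "(\<Sum>r\<in>mid m \<alpha>. \<alpha> r) =
       (real m + 1 - real (cntB m \<alpha>)) + (real (cntA m \<alpha>) - 2 - real (cntB m \<alpha>)) * \<alpha> 0"
    by (auto simp: cond3_def)
  have c: "card (mid m \<alpha>) = m + 3 - cntA m \<alpha>" using part_card[OF adm] B by simp
  have "(\<Sum>r\<in>mid m \<alpha>. - \<alpha> r) = real (card (mid m \<alpha>)) * (\<alpha> 0)"
  proof -
    have rA: "real (card (mid m \<alpha>)) = real m + 3 - real (cntA m \<alpha>)" using c A by (simp add: of_nat_diff)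
    have e1: "real m + 1 - real (cntB m \<alpha>) = 0" using B by simp
    have e2: "real (cntA m \<alpha>) - 2 - real (cntB m \<alpha>) = - (real m + 3 - real (cntA m \<alpha>))" using B by simp
    have "(\<Sum>r\<in>mid m \<alpha>. - \<alpha> r) = - (\<Sum>r\<in>mid m \<alpha>. \<alpha> r)" by (simp add: sum_negf)
    then show ?thesis unfolding rA eq e1 e2 by (simp add: algebra_simps)
  qed
  then have "\<forall>r\<in>mid m \<alpha>. - \<alpha> r = \<alpha> 0"
    by (intro sum_eq_bound) (auto simp: mid_def)
  then show "\<forall>r\<in>mid m \<alpha>. \<alpha> r = - \<alpha> 0" by auto

qed

theorem lemma3p4:
  fixes m :: nat
  shows
    "(\<forall>\<alpha>. admissible m \<alpha> \<longrightarrow>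
        (E_val m \<alpha> = 0 \<longleftrightarrow> cond1 m \<alpha> \<or> cond2 m \<alpha> \<or> cond3 m \<alpha>))
   \<and> (\<forall>a0 A B. -(1/2) < a0 \<and> a0 < 0 \<and> 2 \<le> A \<and> A \<le> m + 3 \<and> B \<le> m + 1 \<longrightarrow>
        (\<exists>x :: nat \<Rightarrow> real.
           (\<forall>i < 2*m+4 - A - B. - a0 \<le> x i \<and> x i \<le> 1 + a0) \<and>
           (\<Sum>i<2*m+4 - A - B. x i) = (real m + 1 - real B) + (real A - 2 - real B) * a0))
   \<and> (\<forall>\<alpha>. admissible m \<alpha> \<and> cond3 m \<alpha> \<and> cntA m \<alpha> = m + 3 \<longrightarrow>
        (\<forall>r\<in>mid m \<alpha>. \<alpha> r = 1 + \<alpha> 0))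
   \<and> (\<forall>\<alpha>. admissible m \<alpha> \<and> cond3 m \<alpha> \<and> cntB m \<alpha> = m + 1 \<longrightarrow>
        (\<forall>r\<in>mid m \<alpha>. \<alpha> r = - \<alpha> 0))"
  using part0 part1 part2 part3 by blast

end
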